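(* Let $\Gamma$ be a metric graph and let $F$ be a subbundle of a vector bundle $E$ on $\Gamma$. Then there exists another subbundle $H$ of $E$ such that $E\simeq F\oplus H$.
   Context: A vector bundle of rank $n$ on a metric graph $\Gamma$ is a torsor under the sheaf of groups $S_n\ltimes\mathcal{H}_\Gamma^n$, where $\mathcal{H}_\Gamma$ is the sheaf of harmonic functions (piecewise linear with integer slopes and zero Laplacian) and $S_n$ permutes factors. With respect to an oriented simple model of $\Gamma$ and its star cover, it is described by transition matrices $g^e$ on the edges $e$ with entries in $\mathbb{T}=\mathbb{R}\cup\{\infty\}$ having exactly one finite entry in each row and column, the finite entries being affine functions with integer slope on $e$; two bundles are isomorphic iff their transition data are cohomologous. The direct sum $E\oplus F$ has block-diagonal transition matrices $\begin{bmatrix} g^e&\infty\\ \infty& h^e\end{bmatrix}$. A rank-$m$ bundle $F$ ($m\le n$) is a subbundle of the rank-$n$ bundle $E$ if transition matrices $h^e$ of $F$ and $g^e$ of $E$ can be chosen with $g^e=\begin{bmatrix} h^e&\ast\\ \infty&\ast\end{bmatrix}$ for all edges $e$. *)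

theory Defs
  imports Main "HOL-Library.Extended_Real"
begin

text \<open>A metric graph is presented by an oriented simple model: finitely many vertices,
finitely many edges, each edge e oriented from msrc e to mtgt e and of length mlen e > 0;
no loops, no multiple edges, and the graph is connected.\<close>

record ('v, 'e) osmodel =
  mV :: "'v set"
  mE :: "'e set"
  msrc :: "'e \<Rightarrow> 'v"
  mtgt :: "'e \<Rightarrow> 'v"
  mlen :: "'e \<Rightarrow> real"

definition adjacent :: "('v, 'e) osmodel \<Rightarrow> 'v \<Rightarrow> 'v \<Rightarrow> bool" where
  "adjacent G x y \<longleftrightarrow> (\<exists>e\<in>mE G. {msrc G e, mtgt G e} = {x, y})"

definition oriented_simple_model :: "('v, 'e) osmodel \<Rightarrow> bool" where
  "oriented_simple_model G \<longleftrightarrow>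
     finite (mV G) \<and> finite (mE G) \<and> mV G \<noteq> {} \<and>
     (\<forall>e\<in>mE G. msrc G e \<in> mV G \<and> mtgt G e \<in> mV G \<and> msrc G e \<noteq> mtgt G e \<and> mlen G e > 0) \<and>
     (\<forall>e\<in>mE G. \<forall>e'\<in>mE G. {msrc G e, mtgt G e} = {msrc G e', mtgt G e'} \<longrightarrow> e = e') \<and>
     (\<forall>x\<in>mV G. \<forall>y\<in>mV G. (adjacent G)\<^sup>*\<^sup>* x y)"

text \<open>Points of the metric graph: a vertex, or the point of edge e at parameter t
(measured from msrc e; interior points have 0 < t < mlen e).\<close>

datatype ('v, 'e) gpoint = Vtx 'v | Ept 'e real

definition incident :: "('v, 'e) osmodel \<Rightarrow> 'v \<Rightarrow> 'e set" where
  "incident G v = {e \<in> mE G. msrc G e = v \<or> mtgt G e = v}"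

definition open_edge :: "('v, 'e) osmodel \<Rightarrow> 'e \<Rightarrow> ('v, 'e) gpoint set" where
  "open_edge G e = {Ept e t | t. 0 < t \<and> t < mlen G e}"

text \<open>The open star of v (the open sets of the star cover).\<close>
definition star :: "('v, 'e) osmodel \<Rightarrow> 'v \<Rightarrow> ('v, 'e) gpoint set" where
  "star G v = {Vtx v} \<union> (\<Union>e\<in>incident G v. open_edge G e)"

definition dist_from :: "('v, 'e) osmodel \<Rightarrow> 'v \<Rightarrow> 'e \<Rightarrow> real \<Rightarrow> real" where
  "dist_from G v e t = (if msrc G e = v then t else mlen G e - t)"

text \<open>Harmonic functions on the open star of v: piecewise linear with integer slopes and
zero Laplacian, i.e. linear with integer (outgoing) slope on each open edge, continuous at v,
and outgoing slopes at v summing to zero.\<close>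
definition harmonic_on_star :: "('v, 'e) osmodel \<Rightarrow> 'v \<Rightarrow> (('v, 'e) gpoint \<Rightarrow> real) \<Rightarrow> bool" where
  "harmonic_on_star G v f \<longleftrightarrow>
     (\<exists>c::real. \<exists>m::'e \<Rightarrow> int.
        (\<Sum>e\<in>incident G v. m e) = 0 \<and> f (Vtx v) = c \<and>
        (\<forall>e\<in>incident G v. \<forall>t. 0 < t \<and> t < mlen G e \<longrightarrow>
            f (Ept e t) = c + of_int (m e) * dist_from G v e t))"

text \<open>Entries are T-valued functions (T = R \<union> {\<infinity>}, realised inside ereal; -\<infinity> never occurs).
Matrices are indexed by natural numbers; only indices below the rank matter.\<close>

type_synonym ('v, 'e) tmat = "nat \<Rightarrow> nat \<Rightarrow> ('v, 'e) gpoint \<Rightarrow> ereal"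

definition is_infinite_on :: "'p set \<Rightarrow> ('p \<Rightarrow> ereal) \<Rightarrow> bool" where
  "is_infinite_on S f \<longleftrightarrow> (\<forall>p\<in>S. f p = \<infinity>)"

definition monomial_mat :: "nat \<Rightarrow> 'p set \<Rightarrow> (('p \<Rightarrow> ereal) \<Rightarrow> bool) \<Rightarrow> (nat \<Rightarrow> nat \<Rightarrow> 'p \<Rightarrow> ereal) \<Rightarrow> bool" where
  "monomial_mat n S P A \<longleftrightarrow>
     (\<forall>i<n. \<forall>j<n. is_infinite_on S (A i j) \<or> P (A i j)) \<and>
     (\<forall>i<n. \<exists>!j. j < n \<and> \<not> is_infinite_on S (A i j)) \<and>
     (\<forall>j<n. \<exists>!i. i < n \<and> \<not> is_infinite_on S (A i j))"

definition tprod :: "nat \<Rightarrow> (nat \<Rightarrow> nat \<Rightarrow> 'p \<Rightarrow> ereal) \<Rightarrow> (nat \<Rightarrow> nat \<Rightarrow> 'p \<Rightarrow> ereal) \<Rightarrow> (nat \<Rightarrow> nat \<Rightarrow> 'p \<Rightarrow> ereal)" where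
  "tprod n A B = (\<lambda>i j p. INF k\<in>{..<n}. A i k p + B k j p)"

definition int_affine_on_edge :: "('v, 'e) osmodel \<Rightarrow> 'e \<Rightarrow> (('v, 'e) gpoint \<Rightarrow> ereal) \<Rightarrow> bool" where
  "int_affine_on_edge G e f \<longleftrightarrow>
     (\<exists>a::real. \<exists>m::int. \<forall>t. 0 < t \<and> t < mlen G e \<longrightarrow> f (Ept e t) = ereal (a + of_int m * t))"

text \<open>Transition data of a rank-n vector bundle w.r.t. the model and its star cover.\<close>
definition trans_data :: "('v, 'e) osmodel \<Rightarrow> nat \<Rightarrow> ('e \<Rightarrow> ('v, 'e) tmat) \<Rightarrow> bool" where
  "trans_data G n g \<longleftrightarrow>
     (\<forall>e\<in>mE G. monomial_mat n (open_edge G e) (int_affine_on_edge G e) (g e))"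

text \<open>Sections of S_n \<ltimes> H^n over the star of v, written as monomial matrices of harmonic functions.\<close>
definition star_section :: "('v, 'e) osmodel \<Rightarrow> nat \<Rightarrow> 'v \<Rightarrow> ('v, 'e) tmat \<Rightarrow> bool" where
  "star_section G n v \<phi> \<longleftrightarrow>
     monomial_mat n (star G v)
       (\<lambda>f. \<exists>h. harmonic_on_star G v h \<and> (\<forall>p\<in>star G v. f p = ereal (h p))) \<phi>"

text \<open>Cohomologous transition data (= isomorphic bundles): g' ^e \<odot> \<phi>_src = \<phi>_tgt \<odot> g^e
on every edge, for a 0-cochain \<phi>.\<close>
definition cohomologous :: "('v, 'e) osmodel \<Rightarrow> nat \<Rightarrow> ('e \<Rightarrow> ('v, 'e) tmat) \<Rightarrow> ('e \<Rightarrow> ('v, 'e) tmat) \<Rightarrow> bool" where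
  "cohomologous G n g g' \<longleftrightarrow>
     (\<exists>\<phi>. (\<forall>v\<in>mV G. star_section G n v (\<phi> v)) \<and>
          (\<forall>e\<in>mE G. \<forall>p\<in>open_edge G e. \<forall>i<n. \<forall>j<n.
              tprod n (g' e) (\<phi> (msrc G e)) i j p = tprod n (\<phi> (mtgt G e)) (g e) i j p))"

definition dsum :: "nat \<Rightarrow> ('e \<Rightarrow> ('v, 'e) tmat) \<Rightarrow> ('e \<Rightarrow> ('v, 'e) tmat) \<Rightarrow> ('e \<Rightarrow> ('v, 'e) tmat)" where
  "dsum m g h = (\<lambda>e i j. if i < m \<and> j < m then g e i j
                         else if m \<le> i \<and> m \<le> j then h e (i - m) (j - m)
                         else (\<lambda>_. \<infinity>))"

definition subbundle :: "('v, 'e) osmodel \<Rightarrow> nat \<Rightarrow> ('e \<Rightarrow> ('v, 'e) tmat) \<Rightarrow> nat \<Rightarrow> ('e \<Rightarrow> ('v, 'e) tmat) \<Rightarrow> bool" where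
  "subbundle G m f n g \<longleftrightarrow> m \<le> n \<and>
     (\<exists>f' g'. trans_data G m f' \<and> trans_data G n g' \<and>
        cohomologous G m f f' \<and> cohomologous G n g g' \<and>
        (\<forall>e\<in>mE G. \<forall>p\<in>open_edge G e. \<forall>i<m. \<forall>j<m. g' e i j p = f' e i j p) \<and>
        (\<forall>e\<in>mE G. \<forall>p\<in>open_edge G e. \<forall>i j. m \<le> i \<and> i < n \<and> j < m \<longrightarrow> g' e i j p = \<infinity>))"

end

theory Submission
  imports Defs
begin

lemma INF_add_right_fin:
  fixes x :: "'a \<Rightarrow> ereal"
  assumes "finite K"
  shows "(INF k\<in>K. x k) + c = (INF k\<in>K. x k + c)"
proof (cases "K = {}")
  case True then show ?thesis by (simp add: top_ereal_def)
next
  case False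
  have m: "mono (\<lambda>y::ereal. y + c)" by (auto intro: monoI add_right_mono)
  have "(INF k\<in>K. x k) = Min (x ` K)" using assms False by (simp add: cInf_eq_Min)
  moreover have "(INF k\<in>K. x k + c) = Min ((\<lambda>k. x k + c) ` K)" using assms False by (simp add: cInf_eq_Min)
  moreover have "Min (x ` K) + c = Min ((\<lambda>y. y + c) ` (x ` K))"
    using mono_Min_commute[OF m] assms False by simp
  ultimately show ?thesis by (simp add: image_comp o_def)
qed

lemma INF_add_left_fin:
  fixes x :: "'a \<Rightarrow> ereal"
  assumes "finite K"
  shows "c + (INF k\<in>K. x k) = (INF k\<in>K. c + x k)"
  using INF_add_right_fin[OF assms, of x c] by (simp add: add.commute)

lemma INF_single:
  fixes x :: "'a \<Rightarrow> ereal"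
  assumes "k0 \<in> K" "\<And>k. k \<in> K \<Longrightarrow> k \<noteq> k0 \<Longrightarrow> x k = \<infinity>"
  shows "(INF k\<in>K. x k) = x k0"
proof -
  have "K = insert k0 (K - {k0})" using assms by auto
  then have "(INF k\<in>K. x k) = inf (x k0) (INF k\<in>K - {k0}. x k)"
    by (metis INF_insert)
  also have "(INF k\<in>K - {k0}. x k) = \<infinity>" using assms(2) by (simp add: top_ereal_def[symmetric])
  finally show ?thesis by simp
qed

lemma tprod_assoc:
  "tprod n (tprod n A B) C i j p = tprod n A (tprod n B C) i j p"
proof -
  have "tprod n (tprod n A B) C i j p = (INF l\<in>{..<n}. INF k\<in>{..<n}. A i k p + B k l p + C l j p)"
    unfolding tprod_def by (simp add: INF_add_right_fin)
  also have "\<dots> = (INF k\<in>{..<n}. INF l\<in>{..<n}. A i k p + (B k l p + C l j p))"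
    by (subst INF_commute) (simp add: add.assoc)
  also have "\<dots> = tprod n A (tprod n B C) i j p"
    unfolding tprod_def by (simp add: INF_add_left_fin)
  finally show ?thesis .
qed

definition idm :: "nat \<Rightarrow> nat \<Rightarrow> 'p \<Rightarrow> ereal" where
  "idm i j p = (if i = j then 0 else \<infinity>)"

definition minv :: "(nat \<Rightarrow> nat \<Rightarrow> 'p \<Rightarrow> ereal) \<Rightarrow> (nat \<Rightarrow> nat \<Rightarrow> 'p \<Rightarrow> ereal)" where
  "minv A = (\<lambda>i j p. if A j i p = \<infinity> then \<infinity> else - A j i p)"

definition eqn :: "nat \<Rightarrow> 'p \<Rightarrow> (nat \<Rightarrow> nat \<Rightarrow> 'p \<Rightarrow> ereal) \<Rightarrow> (nat \<Rightarrow> nat \<Rightarrow> 'p \<Rightarrow> ereal) \<Rightarrow> bool" where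
  "eqn n p A B \<longleftrightarrow> (\<forall>i<n. \<forall>j<n. A i j p = B i j p)"

definition pm :: "nat \<Rightarrow> 'p \<Rightarrow> (nat \<Rightarrow> nat \<Rightarrow> 'p \<Rightarrow> ereal) \<Rightarrow> bool" where
  "pm n p A \<longleftrightarrow> (\<forall>i<n. \<forall>j<n. A i j p \<noteq> -\<infinity>) \<and>
     (\<forall>i<n. \<exists>!j. j < n \<and> A i j p \<noteq> \<infinity>) \<and> (\<forall>j<n. \<exists>!i. i < n \<and> A i j p \<noteq> \<infinity>)"

lemma eqn_refl: "eqn n p A A" by (simp add: eqn_def)
lemma eqn_sym: "eqn n p A B \<Longrightarrow> eqn n p B A" by (simp add: eqn_def)
lemma eqn_trans [trans]: "eqn n p A B \<Longrightarrow> eqn n p B C \<Longrightarrow> eqn n p A C" by (simp add: eqn_def)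

lemma tprod_cong:
  assumes "eqn n p A A'" "eqn n p B B'"
  shows "eqn n p (tprod n A B) (tprod n A' B')"
  using assms unfolding eqn_def tprod_def by (auto intro!: INF_cong)

lemma eqn_assoc: "eqn n p (tprod n (tprod n A B) C) (tprod n A (tprod n B C))"
  by (simp add: eqn_def tprod_assoc)

lemma tprod_id_left: "i < n \<Longrightarrow> tprod n idm A i j p = A i j p"
  unfolding tprod_def by (subst INF_single[of i]) (auto simp: idm_def)

lemma tprod_id_right: "j < n \<Longrightarrow> tprod n A idm i j p = A i j p"
  unfolding tprod_def by (subst INF_single[of j]) (auto simp: idm_def)

lemma eqn_idl: "eqn n p (tprod n idm A) A" by (simp add: eqn_def tprod_id_left)
lemma eqn_idr: "eqn n p (tprod n A idm) A" by (simp add: eqn_def tprod_id_right)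

lemma ereal_add_neg_self: "x \<noteq> \<infinity> \<Longrightarrow> x \<noteq> -\<infinity> \<Longrightarrow> x + - x = (0::ereal)"
  by (cases x) auto
lemma ereal_neg_add_self: "x \<noteq> \<infinity> \<Longrightarrow> x \<noteq> -\<infinity> \<Longrightarrow> - x + x = (0::ereal)"
  by (cases x) auto

lemma pmD:
  assumes "pm n p A"
  shows "\<And>i j. i < n \<Longrightarrow> j < n \<Longrightarrow> A i j p \<noteq> -\<infinity>"
    and "\<And>i. i < n \<Longrightarrow> \<exists>!j. j < n \<and> A i j p \<noteq> \<infinity>"
    and "\<And>j. j < n \<Longrightarrow> \<exists>!i. i < n \<and> A i j p \<noteq> \<infinity>"
  using assms unfolding pm_def by blast+

lemma pm_inv_right:
  assumes "pm n p A"
  shows "eqn n p (tprod n A (minv A)) idm"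
  unfolding eqn_def
proof (intro allI impI)
  fix i j assume i: "i < n" and j: "j < n"
  from pmD(2)[OF assms i] obtain s where s: "s < n" "A i s p \<noteq> \<infinity>" and su: "\<And>k. k < n \<Longrightarrow> A i k p \<noteq> \<infinity> \<Longrightarrow> k = s"
    by blast
  have "tprod n A (minv A) i j p = A i s p + minv A s j p"
  proof -
    have inf: "\<And>k. k < n \<Longrightarrow> k \<noteq> s \<Longrightarrow> A i k p = \<infinity>" using su by blast
    show ?thesis unfolding tprod_def by (rule INF_single) (use s(1) inf in auto)
  qed
  also have "\<dots> = idm i j p"
  proof (cases "j = i")
    case True
    have "A i s p \<noteq> -\<infinity>" using pmD(1)[OF assms i s(1)] .
    then show ?thesis using s True unfolding minv_def idm_def
      by (simp add: ereal_add_neg_self)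
  next
    case False
    have "A j s p = \<infinity>"
    proof (rule ccontr)
      assume a: "A j s p \<noteq> \<infinity>"
      from pmD(3)[OF assms s(1)] show False using a s i j False by blast
    qed
    then show ?thesis using False by (simp add: minv_def idm_def)
  qed
  finally show "tprod n A (minv A) i j p = idm i j p" .
qed

lemma pm_inv_left:
  assumes "pm n p A"
  shows "eqn n p (tprod n (minv A) A) idm"
  unfolding eqn_def
proof (intro allI impI)
  fix i j assume i: "i < n" and j: "j < n"
  from pmD(3)[OF assms i] obtain s where s: "s < n" "A s i p \<noteq> \<infinity>" and su: "\<And>k. k < n \<Longrightarrow> A k i p \<noteq> \<infinity> \<Longrightarrow> k = s"
    by blast
  have "tprod n (minv A) A i j p = minv A i s p + A s j p"
  proof -
    have inf: "\<And>k. k < n \<Longrightarrow> k \<noteq> s \<Longrightarrow> A k i p = \<infinity>" using su by blast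
    show ?thesis unfolding tprod_def by (rule INF_single) (use s(1) inf in \<open>auto simp: minv_def\<close>)
  qed
  also have "\<dots> = idm i j p"
  proof (cases "j = i")
    case True
    have "A s i p \<noteq> -\<infinity>" using pmD(1)[OF assms s(1) i] .
    then show ?thesis using s True unfolding minv_def idm_def
      by (simp add: ereal_neg_add_self)
  next
    case False
    have "A s j p = \<infinity>"
    proof (rule ccontr)
      assume a: "A s j p \<noteq> \<infinity>"
      from pmD(2)[OF assms s(1)] show False using a s i j False by blast
    qed
    then show ?thesis using False by (simp add: minv_def idm_def)
  qed
  finally show "tprod n (minv A) A i j p = idm i j p" .
qed

definition finP :: "(('p \<Rightarrow> real) \<Rightarrow> bool) \<Rightarrow> 'p set \<Rightarrow> ('p \<Rightarrow> ereal) \<Rightarrow> bool" where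
  "finP H S f \<longleftrightarrow> (\<exists>h. H h \<and> (\<forall>p\<in>S. f p = ereal (h p)))"

lemma star_section_finP:
  "star_section G n v A \<longleftrightarrow> monomial_mat n (star G v) (finP (harmonic_on_star G v) (star G v)) A"
  unfolding star_section_def finP_def by (simp add: fun_eq_iff)

lemma mmD:
  assumes "monomial_mat n S P A"
  shows "\<And>i j. i < n \<Longrightarrow> j < n \<Longrightarrow> is_infinite_on S (A i j) \<or> P (A i j)"
    and "\<And>i. i < n \<Longrightarrow> \<exists>!j. j < n \<and> \<not> is_infinite_on S (A i j)"
    and "\<And>j. j < n \<Longrightarrow> \<exists>!i. i < n \<and> \<not> is_infinite_on S (A i j)"
  using assms unfolding monomial_mat_def by blast+

lemma mm_entry:
  assumes "monomial_mat n S (finP H S) A" "i < n" "j < n" "p \<in> S"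
  shows "A i j p \<noteq> -\<infinity> \<and> (A i j p \<noteq> \<infinity> \<longleftrightarrow> \<not> is_infinite_on S (A i j))"
proof -
  from mmD(1)[OF assms(1,2,3)] show ?thesis
  proof
    assume "is_infinite_on S (A i j)"
    then show ?thesis using assms(4) unfolding is_infinite_on_def by auto
  next
    assume a: "finP H S (A i j)"
    then obtain h where "\<forall>p\<in>S. A i j p = ereal (h p)" unfolding finP_def by blast
    then show ?thesis using assms(4) unfolding is_infinite_on_def by auto
  qed
qed

lemma mm_pm:
  assumes "monomial_mat n S (finP H S) A" "p \<in> S"
  shows "pm n p A"
proof -
  have e: "\<And>i j. i < n \<Longrightarrow> j < n \<Longrightarrow> A i j p \<noteq> -\<infinity> \<and> (A i j p \<noteq> \<infinity> \<longleftrightarrow> \<not> is_infinite_on S (A i j))"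
    using mm_entry[OF assms(1) _ _ assms(2)] by blast
  show ?thesis unfolding pm_def
  proof (intro conjI allI impI)
    fix i j assume "i < n" "j < n" then show "A i j p \<noteq> -\<infinity>" using e by blast
  next
    fix i assume i: "i < n"
    from mmD(2)[OF assms(1) i] show "\<exists>!j. j < n \<and> A i j p \<noteq> \<infinity>" using e i by blast
  next
    fix j assume j: "j < n"
    from mmD(3)[OF assms(1) j] show "\<exists>!i. i < n \<and> A i j p \<noteq> \<infinity>" using e j by blast
  qed
qed

lemma prod_entry:
  assumes A: "monomial_mat n S (finP H S) A" and B: "monomial_mat n S (finP H S) B"
    and Hadd: "\<forall>h1 h2. H h1 \<longrightarrow> H h2 \<longrightarrow> H (\<lambda>p. h1 p + h2 p)"
    and i: "i < n" and j: "j < n"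
  shows "(\<exists>k<n. \<not> is_infinite_on S (A i k) \<and> \<not> is_infinite_on S (B k j) \<and>
            finP H S (tprod n A B i j) \<and> \<not> is_infinite_on S (tprod n A B i j)) \<or>
         ((\<forall>k<n. is_infinite_on S (A i k) \<or> is_infinite_on S (B k j)) \<and> is_infinite_on S (tprod n A B i j))"
proof -
  from mmD(2)[OF A i] obtain s where s: "s < n" "\<not> is_infinite_on S (A i s)"
    and su: "\<And>k. k < n \<Longrightarrow> \<not> is_infinite_on S (A i k) \<Longrightarrow> k = s" by blast
  have infA: "\<And>k. k < n \<Longrightarrow> k \<noteq> s \<Longrightarrow> is_infinite_on S (A i k)" using su by blast
  have val: "tprod n A B i j p = A i s p + B s j p" if p: "p \<in> S" for p
  proof -
    have inf: "\<And>k. k < n \<Longrightarrow> k \<noteq> s \<Longrightarrow> A i k p = \<infinity>" using infA p unfolding is_infinite_on_def by blast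
    show ?thesis unfolding tprod_def by (rule INF_single) (use s(1) inf in auto)
  qed
  from mmD(1)[OF A i s(1)] s(2) obtain h1 where h1: "H h1" "\<And>p. p \<in> S \<Longrightarrow> A i s p = ereal (h1 p)"
    unfolding finP_def by blast
  show ?thesis
  proof (cases "is_infinite_on S (B s j)")
    case True
    have "is_infinite_on S (tprod n A B i j)"
      using True val unfolding is_infinite_on_def by simp
    moreover have "\<forall>k<n. is_infinite_on S (A i k) \<or> is_infinite_on S (B k j)"
      using True infA by blast
    ultimately show ?thesis by blast
  next
    case False
    from mmD(1)[OF B s(1) j] False obtain h2 where h2: "H h2" "\<And>p. p \<in> S \<Longrightarrow> B s j p = ereal (h2 p)"
      unfolding finP_def by blast
    have fin: "\<And>p. p \<in> S \<Longrightarrow> tprod n A B i j p = ereal (h1 p + h2 p)"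
      using val h1 h2 by simp
    have "finP H S (tprod n A B i j)"
      unfolding finP_def using Hadd h1(1) h2(1) fin by blast
    moreover from s(2) obtain p where "p \<in> S" unfolding is_infinite_on_def by blast
    then have "\<not> is_infinite_on S (tprod n A B i j)"
      using fin unfolding is_infinite_on_def by auto
    ultimately show ?thesis using s False by blast
  qed
qed

lemma mm_prod:
  assumes A: "monomial_mat n S (finP H S) A" and B: "monomial_mat n S (finP H S) B"
    and Hadd: "\<forall>h1 h2. H h1 \<longrightarrow> H h2 \<longrightarrow> H (\<lambda>p. h1 p + h2 p)"
  shows "monomial_mat n S (finP H S) (tprod n A B)"
proof -
  note pe = prod_entry[OF A B Hadd]
  show ?thesis unfolding monomial_mat_def
  proof (intro conjI allI impI)
    fix i j assume i: "i < n" and j: "j < n"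
    from pe[OF i j] show "is_infinite_on S (tprod n A B i j) \<or> finP H S (tprod n A B i j)" by blast
  next
    fix i assume i: "i < n"
    from mmD(2)[OF A i] obtain s where s: "s < n" "\<not> is_infinite_on S (A i s)" by blast
    from mmD(2)[OF B s(1)] obtain t where t: "t < n" "\<not> is_infinite_on S (B s t)" by blast
    have ex: "\<not> is_infinite_on S (tprod n A B i t)" using pe[OF i t(1)] s t by blast
    show "\<exists>!j. j < n \<and> \<not> is_infinite_on S (tprod n A B i j)"
    proof (rule ex1I[of _ t])
      show "t < n \<and> \<not> is_infinite_on S (tprod n A B i t)" using t ex by blast
    next
      fix j assume jj: "j < n \<and> \<not> is_infinite_on S (tprod n A B i j)"
      then obtain k where k: "k < n" "\<not> is_infinite_on S (A i k)" "\<not> is_infinite_on S (B k j)"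
        using pe[OF i] by blast
      have "k = s" using mmD(2)[OF A i] k s by blast
      then show "j = t" using mmD(2)[OF B s(1)] k t jj by blast
    qed
  next
    fix j assume j: "j < n"
    from mmD(3)[OF B j] obtain s where s: "s < n" "\<not> is_infinite_on S (B s j)" by blast
    from mmD(3)[OF A s(1)] obtain t where t: "t < n" "\<not> is_infinite_on S (A t s)" by blast
    have ex: "\<not> is_infinite_on S (tprod n A B t j)" using pe[OF t(1) j] s t by blast
    show "\<exists>!i. i < n \<and> \<not> is_infinite_on S (tprod n A B i j)"
    proof (rule ex1I[of _ t])
      show "t < n \<and> \<not> is_infinite_on S (tprod n A B t j)" using t ex by blast
    next
      fix i assume ii: "i < n \<and> \<not> is_infinite_on S (tprod n A B i j)"
      then obtain k where k: "k < n" "\<not> is_infinite_on S (A i k)" "\<not> is_infinite_on S (B k j)"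
        using pe[OF _ j] by blast
      have "k = s" using mmD(3)[OF B j] k s by blast
      then show "i = t" using mmD(3)[OF A s(1)] k t ii by blast
    qed
  qed
qed

lemma mm_minv:
  assumes A: "monomial_mat n S (finP H S) A"
    and Hneg: "\<forall>h. H h \<longrightarrow> H (\<lambda>p. - h p)"
  shows "monomial_mat n S (finP H S) (minv A)"
proof -
  have ent: "(is_infinite_on S (minv A i j) \<longleftrightarrow> is_infinite_on S (A j i)) \<and>
        (is_infinite_on S (minv A i j) \<or> finP H S (minv A i j))" if i: "i < n" and j: "j < n" for i j
  proof (cases "is_infinite_on S (A j i)")
    case True
    then have "is_infinite_on S (minv A i j)" unfolding is_infinite_on_def minv_def by simp
    then show ?thesis using True by blast
  next
    case False
    from mmD(1)[OF A j i] False obtain h where h: "H h" "\<And>p. p \<in> S \<Longrightarrow> A j i p = ereal (h p)"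
      unfolding finP_def by blast
    have v: "\<And>p. p \<in> S \<Longrightarrow> minv A i j p = ereal (- h p)" using h(2) unfolding minv_def by simp
    have "finP H S (minv A i j)" unfolding finP_def using Hneg h(1) v by blast
    moreover from False obtain p where "p \<in> S" unfolding is_infinite_on_def by blast
    then have "\<not> is_infinite_on S (minv A i j)" using v unfolding is_infinite_on_def by auto
    ultimately show ?thesis using False by blast
  qed
  show ?thesis unfolding monomial_mat_def
  proof (intro conjI allI impI)
    fix i j assume "i < n" "j < n" then show "is_infinite_on S (minv A i j) \<or> finP H S (minv A i j)"
      using ent by blast
  next
    fix i assume i: "i < n"
    from mmD(3)[OF A i] show "\<exists>!j. j < n \<and> \<not> is_infinite_on S (minv A i j)" using ent i by blast
  next
    fix j assume j: "j < n"
    from mmD(2)[OF A j] show "\<exists>!i. i < n \<and> \<not> is_infinite_on S (minv A i j)" using ent j by blast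
  qed
qed

definition pmat :: "(nat \<Rightarrow> nat) \<Rightarrow> nat \<Rightarrow> nat \<Rightarrow> 'p \<Rightarrow> ereal" where
  "pmat \<pi> i j p = (if j = \<pi> i then 0 else \<infinity>)"

lemma idm_pmat: "idm = pmat id"
  by (simp add: fun_eq_iff idm_def pmat_def eq_commute)

lemma mm_pmat:
  assumes S: "S \<noteq> {}" and H0: "H (\<lambda>_. 0)"
    and bij: "bij_betw \<pi> {..<n} {..<n}"
  shows "monomial_mat n S (finP H S) (pmat \<pi>)"
proof -
  have ent: "(is_infinite_on S (pmat \<pi> i j) \<longleftrightarrow> j \<noteq> \<pi> i) \<and> (is_infinite_on S (pmat \<pi> i j) \<or> finP H S (pmat \<pi> i j))" for i j
  proof (cases "j = \<pi> i")
    case True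
    have "finP H S (pmat \<pi> i j)" unfolding finP_def using H0 True by (auto simp: pmat_def)
    moreover have "\<not> is_infinite_on S (pmat \<pi> i j)" using S True by (auto simp: pmat_def is_infinite_on_def)
    ultimately show ?thesis using True by blast
  next
    case False
    then show ?thesis by (auto simp: pmat_def is_infinite_on_def)
  qed
  have inv: "\<exists>!i. i < n \<and> j = \<pi> i" if j: "j < n" for j
  proof -
    from bij j have "j \<in> \<pi> ` {..<n}" unfolding bij_betw_def by simp
    then obtain i where "i < n" "\<pi> i = j" by blast
    moreover have "\<And>i'. i' < n \<Longrightarrow> \<pi> i' = j \<Longrightarrow> i' = i" using bij calculation
      unfolding bij_betw_def inj_on_def by blast
    ultimately show ?thesis by metis
  qed
  have range: "\<pi> i < n" if "i < n" for i using bij that unfolding bij_betw_def by blast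
  show ?thesis unfolding monomial_mat_def
  proof (intro conjI allI impI)
    fix i j assume "i < n" "j < n" then show "is_infinite_on S (pmat \<pi> i j) \<or> finP H S (pmat \<pi> i j)"
      using ent by blast
  next
    fix i assume i: "i < n"
    show "\<exists>!j. j < n \<and> \<not> is_infinite_on S (pmat \<pi> i j)" using ent range[OF i] by auto
  next
    fix j assume j: "j < n"
    show "\<exists>!i. i < n \<and> \<not> is_infinite_on S (pmat \<pi> i j)" using ent inv[OF j] by auto
  qed
qed

lemma mm_idm:
  assumes S: "S \<noteq> {}" and H0: "H (\<lambda>_. 0)"
  shows "monomial_mat n S (finP H S) idm"
  unfolding idm_pmat by (rule mm_pmat[where H=H, OF S H0]) simp

definition bd :: "nat \<Rightarrow> (nat \<Rightarrow> nat \<Rightarrow> 'p \<Rightarrow> ereal) \<Rightarrow> (nat \<Rightarrow> nat \<Rightarrow> 'p \<Rightarrow> ereal) \<Rightarrow> nat \<Rightarrow> nat \<Rightarrow> 'p \<Rightarrow> ereal" where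
  "bd m A B = (\<lambda>i j. if i < m \<and> j < m then A i j
                         else if m \<le> i \<and> m \<le> j then B (i - m) (j - m)
                         else (\<lambda>_. \<infinity>))"

lemma dsum_bd: "dsum m g h e = bd m (g e) (h e)"
  by (simp add: dsum_def bd_def)

lemma mm_bd:
  assumes A: "monomial_mat m S P A" and B: "monomial_mat k S P B"
  shows "monomial_mat (m + k) S P (bd m A B)"
  unfolding monomial_mat_def
proof (intro conjI allI impI)
  fix i j assume i: "i < m + k" and j: "j < m + k"
  show "is_infinite_on S (bd m A B i j) \<or> P (bd m A B i j)"
    using mmD(1)[OF A, of i j] mmD(1)[OF B, of "i - m" "j - m"] i j
    by (auto simp: bd_def is_infinite_on_def)
next
  fix i assume i: "i < m + k"
  show "\<exists>!j. j < m + k \<and> \<not> is_infinite_on S (bd m A B i j)"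
  proof (cases "i < m")
    case True
    from mmD(2)[OF A True] obtain j0 where j0: "j0 < m" "\<not> is_infinite_on S (A i j0)"
      and u: "\<And>j. j < m \<Longrightarrow> \<not> is_infinite_on S (A i j) \<Longrightarrow> j = j0" by blast
    show ?thesis
    proof (rule ex1I[of _ j0])
      show "j0 < m + k \<and> \<not> is_infinite_on S (bd m A B i j0)" using j0 True by (simp add: bd_def)
    next
      fix j assume "j < m + k \<and> \<not> is_infinite_on S (bd m A B i j)"
      then show "j = j0" using u True by (auto simp: bd_def is_infinite_on_def split: if_splits)
    qed
  next
    case False
    then have i': "i - m < k" using i by simp
    from mmD(2)[OF B i'] obtain j0 where j0: "j0 < k" "\<not> is_infinite_on S (B (i - m) j0)"
      and u: "\<And>j. j < k \<Longrightarrow> \<not> is_infinite_on S (B (i - m) j) \<Longrightarrow> j = j0" by blast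
    show ?thesis
    proof (rule ex1I[of _ "j0 + m"])
      show "j0 + m < m + k \<and> \<not> is_infinite_on S (bd m A B i (j0 + m))" using j0 False by (simp add: bd_def)
    next
      fix j assume a: "j < m + k \<and> \<not> is_infinite_on S (bd m A B i j)"
      then have "m \<le> j" using False by (auto simp: bd_def is_infinite_on_def split: if_splits)
      then have "j - m = j0" using u[of "j - m"] a False by (auto simp: bd_def)
      then show "j = j0 + m" using \<open>m \<le> j\<close> by simp
    qed
  qed
next
  fix j assume j: "j < m + k"
  show "\<exists>!i. i < m + k \<and> \<not> is_infinite_on S (bd m A B i j)"
  proof (cases "j < m")
    case True
    from mmD(3)[OF A True] obtain i0 where i0: "i0 < m" "\<not> is_infinite_on S (A i0 j)"
      and u: "\<And>i. i < m \<Longrightarrow> \<not> is_infinite_on S (A i j) \<Longrightarrow> i = i0" by blast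
    show ?thesis
    proof (rule ex1I[of _ i0])
      show "i0 < m + k \<and> \<not> is_infinite_on S (bd m A B i0 j)" using i0 True by (simp add: bd_def)
    next
      fix i assume "i < m + k \<and> \<not> is_infinite_on S (bd m A B i j)"
      then show "i = i0" using u True by (auto simp: bd_def is_infinite_on_def split: if_splits)
    qed
  next
    case False
    then have j': "j - m < k" using j by simp
    from mmD(3)[OF B j'] obtain i0 where i0: "i0 < k" "\<not> is_infinite_on S (B i0 (j - m))"
      and u: "\<And>i. i < k \<Longrightarrow> \<not> is_infinite_on S (B i (j - m)) \<Longrightarrow> i = i0" by blast
    show ?thesis
    proof (rule ex1I[of _ "i0 + m"])
      show "i0 + m < m + k \<and> \<not> is_infinite_on S (bd m A B (i0 + m) j)" using i0 False by (simp add: bd_def)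
    next
      fix i assume a: "i < m + k \<and> \<not> is_infinite_on S (bd m A B i j)"
      then have "m \<le> i" using False by (auto simp: bd_def is_infinite_on_def split: if_splits)
      then have "i - m = i0" using u[of "i - m"] a False by (auto simp: bd_def)
      then show "i = i0 + m" using \<open>m \<le> i\<close> by simp
    qed
  qed
qed

lemma harm_add:
  assumes "harmonic_on_star G v h1" "harmonic_on_star G v h2"
  shows "harmonic_on_star G v (\<lambda>p. h1 p + h2 p)"
proof -
  obtain c1 m1 where 1: "(\<Sum>e\<in>incident G v. m1 e) = 0" "h1 (Vtx v) = c1"
    "\<forall>e\<in>incident G v. \<forall>t. 0 < t \<and> t < mlen G e \<longrightarrow> h1 (Ept e t) = c1 + of_int (m1 e) * dist_from G v e t"
    using assms(1) unfolding harmonic_on_star_def by blast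
  obtain c2 m2 where 2: "(\<Sum>e\<in>incident G v. m2 e) = 0" "h2 (Vtx v) = c2"
    "\<forall>e\<in>incident G v. \<forall>t. 0 < t \<and> t < mlen G e \<longrightarrow> h2 (Ept e t) = c2 + of_int (m2 e) * dist_from G v e t"
    using assms(2) unfolding harmonic_on_star_def by blast
  show ?thesis unfolding harmonic_on_star_def
    apply (rule exI[of _ "c1 + c2"], rule exI[of _ "\<lambda>e. m1 e + m2 e"])
    using 1 2 by (simp add: sum.distrib algebra_simps)
qed

lemma harm_neg:
  assumes "harmonic_on_star G v h"
  shows "harmonic_on_star G v (\<lambda>p. - h p)"
proof -
  obtain c m where 1: "(\<Sum>e\<in>incident G v. m e) = 0" "h (Vtx v) = c"
    "\<forall>e\<in>incident G v. \<forall>t. 0 < t \<and> t < mlen G e \<longrightarrow> h (Ept e t) = c + of_int (m e) * dist_from G v e t"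
    using assms(1) unfolding harmonic_on_star_def by blast
  show ?thesis unfolding harmonic_on_star_def
    apply (rule exI[of _ "- c"], rule exI[of _ "\<lambda>e. - m e"])
    using 1 by (simp add: sum_negf algebra_simps)
qed

lemma harm_zero: "harmonic_on_star G v (\<lambda>_. 0)"
  unfolding harmonic_on_star_def by (rule exI[of _ 0], rule exI[of _ "\<lambda>_. 0"]) simp

lemma star_ne: "star G v \<noteq> {}" by (auto simp: star_def)

lemma open_edge_star:
  assumes "e \<in> mE G"
  shows "open_edge G e \<subseteq> star G (msrc G e)" "open_edge G e \<subseteq> star G (mtgt G e)"
  using assms by (auto simp: star_def incident_def)

lemma ss_prod: "star_section G n v A \<Longrightarrow> star_section G n v B \<Longrightarrow> star_section G n v (tprod n A B)"
  unfolding star_section_finP by (rule mm_prod) (auto intro: harm_add)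

lemma ss_minv: "star_section G n v A \<Longrightarrow> star_section G n v (minv A)"
  unfolding star_section_finP by (rule mm_minv) (auto intro: harm_neg)

lemma ss_pmat: "bij_betw \<pi> {..<n} {..<n} \<Longrightarrow> star_section G n v (pmat \<pi>)"
  unfolding star_section_finP by (rule mm_pmat[where H="harmonic_on_star G v", OF star_ne harm_zero])

lemma ss_idm: "star_section G n v idm"
  unfolding star_section_finP by (rule mm_idm[where H="harmonic_on_star G v", OF star_ne harm_zero])

lemma ss_bd: "star_section G m v A \<Longrightarrow> star_section G (m + k) v (bd m A idm)"
  unfolding star_section_finP by (rule mm_bd) (auto intro: mm_idm[where H="harmonic_on_star G v", OF star_ne harm_zero])

lemma ss_pm: "star_section G n v A \<Longrightarrow> p \<in> star G v \<Longrightarrow> pm n p A"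
  unfolding star_section_finP by (rule mm_pm)

lemma INF_all_inf:
  fixes f :: "'a \<Rightarrow> ereal"
  assumes "\<And>k. k \<in> K \<Longrightarrow> f k = \<infinity>"
  shows "(INF k\<in>K. f k) = \<infinity>"
  using assms INF_top_conv[of f K] unfolding top_ereal_def by blast

lemma tprod_bd:
  assumes "m \<le> n" "i < n" "j < n"
  shows "tprod n (bd m A1 A2) (bd m B1 B2) i j p = bd m (tprod m A1 B1) (tprod (n - m) A2 B2) i j p"
proof -
  have U: "{..<n} = {..<m} \<union> (\<lambda>k. k + m) ` {..<n - m}"
  proof -
    have "(\<lambda>k. k + m) ` {0..<n - m} = {m..<n}" using assms(1) by (simp add: image_add_atLeastLessThan)
    then show ?thesis using assms(1) by (auto simp: lessThan_atLeast0)
  qed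
  define X where "X = (INF k\<in>{..<m}. bd m A1 A2 i k p + bd m B1 B2 k j p)"
  define Y where "Y = (INF k\<in>{..<n - m}. bd m A1 A2 i (k + m) p + bd m B1 B2 (k + m) j p)"
  have "tprod n (bd m A1 A2) (bd m B1 B2) i j p = inf X Y"
    unfolding tprod_def U INF_union X_def Y_def by (simp add: image_comp o_def)
  also have "\<dots> = bd m (tprod m A1 B1) (tprod (n - m) A2 B2) i j p"
  proof (cases "i < m")
    case True
    have Y: "Y = \<infinity>" unfolding Y_def by (rule INF_all_inf) (use True in \<open>simp add: bd_def\<close>)
    show ?thesis
    proof (cases "j < m")
      case True
      then show ?thesis using \<open>i < m\<close> Y unfolding X_def by (simp add: bd_def tprod_def)
    next
      case False
      have X: "X = \<infinity>" unfolding X_def by (rule INF_all_inf) (use False in \<open>simp add: bd_def\<close>)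
      then show ?thesis using \<open>i < m\<close> False Y by (simp add: bd_def)
    qed
  next
    case False
    have X: "X = \<infinity>" unfolding X_def by (rule INF_all_inf) (use False in \<open>simp add: bd_def\<close>)
    show ?thesis
    proof (cases "j < m")
      case True
      have Y: "Y = \<infinity>" unfolding Y_def by (rule INF_all_inf) (use True in \<open>simp add: bd_def\<close>)
      then show ?thesis using \<open>\<not> i < m\<close> True X by (simp add: bd_def)
    next
      case jF: False
      then show ?thesis using False X unfolding Y_def by (simp add: bd_def tprod_def)
    qed
  qed
  finally show ?thesis .
qed

definition WF :: "('v, 'e) osmodel \<Rightarrow> bool" where
  "WF G \<longleftrightarrow> (\<forall>e\<in>mE G. msrc G e \<in> mV G \<and> mtgt G e \<in> mV G)"

lemma coh_iff:
  "cohomologous G n a b \<longleftrightarrow> (\<exists>\<phi>. (\<forall>v\<in>mV G. star_section G n v (\<phi> v)) \<and>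
     (\<forall>e\<in>mE G. \<forall>p\<in>open_edge G e. eqn n p (tprod n (b e) (\<phi> (msrc G e))) (tprod n (\<phi> (mtgt G e)) (a e))))"
  unfolding cohomologous_def eqn_def by blast

lemma coh_refl: "cohomologous G n a a"
  unfolding coh_iff
proof (intro exI[of _ "\<lambda>v. idm"] conjI ballI)
  fix v show "star_section G n v idm" by (rule ss_idm)
next
  fix e p
  have "eqn n p (tprod n (a e) idm) (a e)" by (rule eqn_idr)
  also have "eqn n p (a e) (tprod n idm (a e))" by (rule eqn_sym[OF eqn_idl])
  finally show "eqn n p (tprod n (a e) idm) (tprod n idm (a e))" .
qed

lemma coh_cong:
  assumes "cohomologous G n a b" "\<And>e p. e \<in> mE G \<Longrightarrow> p \<in> open_edge G e \<Longrightarrow> eqn n p (b e) (b' e)"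
  shows "cohomologous G n a b'"
proof -
  from assms(1) obtain \<phi> where ss: "\<forall>v\<in>mV G. star_section G n v (\<phi> v)" and
    eq: "\<forall>e\<in>mE G. \<forall>p\<in>open_edge G e. eqn n p (tprod n (b e) (\<phi> (msrc G e))) (tprod n (\<phi> (mtgt G e)) (a e))"
    unfolding coh_iff by blast
  show ?thesis unfolding coh_iff
  proof (intro exI conjI ballI)
    fix v assume "v \<in> mV G" then show "star_section G n v (\<phi> v)" using ss by blast
  next
    fix e p assume e: "e \<in> mE G" and p: "p \<in> open_edge G e"
    have "eqn n p (tprod n (b' e) (\<phi> (msrc G e))) (tprod n (b e) (\<phi> (msrc G e)))"
      by (rule tprod_cong[OF eqn_sym[OF assms(2)[OF e p]] eqn_refl])
    also have "eqn n p \<dots> (tprod n (\<phi> (mtgt G e)) (a e))" using eq e p by blast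
    finally show "eqn n p (tprod n (b' e) (\<phi> (msrc G e))) (tprod n (\<phi> (mtgt G e)) (a e))" .
  qed
qed

lemma coh_trans:
  assumes "cohomologous G n a b" "cohomologous G n b c"
  shows "cohomologous G n a c"
proof -
  from assms(1) obtain \<phi> where ss: "\<forall>v\<in>mV G. star_section G n v (\<phi> v)" and
    eq: "\<forall>e\<in>mE G. \<forall>p\<in>open_edge G e. eqn n p (tprod n (b e) (\<phi> (msrc G e))) (tprod n (\<phi> (mtgt G e)) (a e))"
    unfolding coh_iff by blast
  from assms(2) obtain \<psi> where ss2: "\<forall>v\<in>mV G. star_section G n v (\<psi> v)" and
    eq2: "\<forall>e\<in>mE G. \<forall>p\<in>open_edge G e. eqn n p (tprod n (c e) (\<psi> (msrc G e))) (tprod n (\<psi> (mtgt G e)) (b e))"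
    unfolding coh_iff by blast
  show ?thesis unfolding coh_iff
  proof (intro exI[of _ "\<lambda>v. tprod n (\<psi> v) (\<phi> v)"] conjI ballI)
    fix v assume "v \<in> mV G" then show "star_section G n v (tprod n (\<psi> v) (\<phi> v))"
      using ss ss2 by (blast intro: ss_prod)
  next
    fix e p assume e: "e \<in> mE G" and p: "p \<in> open_edge G e"
    let ?s = "msrc G e" and ?t = "mtgt G e"
    have "eqn n p (tprod n (c e) (tprod n (\<psi> ?s) (\<phi> ?s))) (tprod n (tprod n (c e) (\<psi> ?s)) (\<phi> ?s))"
      by (rule eqn_sym[OF eqn_assoc])
    also have "eqn n p \<dots> (tprod n (tprod n (\<psi> ?t) (b e)) (\<phi> ?s))"
    proof -
      have "eqn n p (tprod n (c e) (\<psi> ?s)) (tprod n (\<psi> ?t) (b e))" using eq2 e p by blast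
      then show ?thesis by (rule tprod_cong[OF _ eqn_refl])
    qed
    also have "eqn n p \<dots> (tprod n (\<psi> ?t) (tprod n (b e) (\<phi> ?s)))"
      by (rule eqn_assoc)
    also have "eqn n p \<dots> (tprod n (\<psi> ?t) (tprod n (\<phi> ?t) (a e)))"
    proof -
      have "eqn n p (tprod n (b e) (\<phi> ?s)) (tprod n (\<phi> ?t) (a e))" using eq e p by blast
      then show ?thesis by (rule tprod_cong[OF eqn_refl])
    qed
    also have "eqn n p \<dots> (tprod n (tprod n (\<psi> ?t) (\<phi> ?t)) (a e))"
      by (rule eqn_sym[OF eqn_assoc])
    finally show "eqn n p (tprod n (c e) (tprod n (\<psi> ?s) (\<phi> ?s))) (tprod n (tprod n (\<psi> ?t) (\<phi> ?t)) (a e))" .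
  qed
qed

lemma coh_sym:
  assumes wf: "WF G" and c: "cohomologous G n a b"
  shows "cohomologous G n b a"
proof -
  from c obtain \<phi> where ss: "\<forall>v\<in>mV G. star_section G n v (\<phi> v)" and
    eq: "\<forall>e\<in>mE G. \<forall>p\<in>open_edge G e. eqn n p (tprod n (b e) (\<phi> (msrc G e))) (tprod n (\<phi> (mtgt G e)) (a e))"
    unfolding coh_iff by blast
  show ?thesis unfolding coh_iff
  proof (intro exI[of _ "\<lambda>v. minv (\<phi> v)"] conjI ballI)
    fix v assume "v \<in> mV G" then show "star_section G n v (minv (\<phi> v))"
      using ss by (blast intro: ss_minv)
  next
    fix e p assume e: "e \<in> mE G" and p: "p \<in> open_edge G e"
    let ?s = "msrc G e" and ?t = "mtgt G e"
    have sv: "?s \<in> mV G" "?t \<in> mV G" using wf e unfolding WF_def by blast+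
    have ps: "p \<in> star G ?s" "p \<in> star G ?t" using open_edge_star[OF e] p by blast+
    have pms: "pm n p (\<phi> ?s)" by (rule ss_pm[OF ss[rule_format, OF sv(1)] ps(1)])
    have pmt: "pm n p (\<phi> ?t)" by (rule ss_pm[OF ss[rule_format, OF sv(2)] ps(2)])
    have "eqn n p (tprod n (a e) (minv (\<phi> ?s))) (tprod n (tprod n idm (a e)) (minv (\<phi> ?s)))"
      by (rule tprod_cong[OF eqn_sym[OF eqn_idl] eqn_refl])
    also have "eqn n p \<dots> (tprod n (tprod n (tprod n (minv (\<phi> ?t)) (\<phi> ?t)) (a e)) (minv (\<phi> ?s)))"
      by (rule tprod_cong[OF tprod_cong[OF eqn_sym[OF pm_inv_left[OF pmt]] eqn_refl] eqn_refl])
    also have "eqn n p \<dots> (tprod n (tprod n (minv (\<phi> ?t)) (tprod n (\<phi> ?t) (a e))) (minv (\<phi> ?s)))"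
      by (rule tprod_cong[OF eqn_assoc eqn_refl])
    also have "eqn n p \<dots> (tprod n (tprod n (minv (\<phi> ?t)) (tprod n (b e) (\<phi> ?s))) (minv (\<phi> ?s)))"
    proof -
      have "eqn n p (tprod n (b e) (\<phi> ?s)) (tprod n (\<phi> ?t) (a e))" using eq e p by blast
      then show ?thesis by (rule tprod_cong[OF tprod_cong[OF eqn_refl eqn_sym] eqn_refl])
    qed
    also have "eqn n p \<dots> (tprod n (tprod n (tprod n (minv (\<phi> ?t)) (b e)) (\<phi> ?s)) (minv (\<phi> ?s)))"
      by (rule tprod_cong[OF eqn_sym[OF eqn_assoc] eqn_refl])
    also have "eqn n p \<dots> (tprod n (tprod n (minv (\<phi> ?t)) (b e)) (tprod n (\<phi> ?s) (minv (\<phi> ?s))))"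
      by (rule eqn_assoc)
    also have "eqn n p \<dots> (tprod n (tprod n (minv (\<phi> ?t)) (b e)) idm)"
      by (rule tprod_cong[OF eqn_refl pm_inv_right[OF pms]])
    also have "eqn n p \<dots> (tprod n (minv (\<phi> ?t)) (b e))"
      by (rule eqn_idr)
    finally show "eqn n p (tprod n (a e) (minv (\<phi> ?s))) (tprod n (minv (\<phi> ?t)) (b e))" .
  qed
qed

lemma coh_bd:
  assumes mn: "m \<le> n" and c: "cohomologous G m a b"
  shows "cohomologous G n (dsum m a h) (dsum m b h)"
proof -
  from c obtain \<phi> where ss: "\<forall>v\<in>mV G. star_section G m v (\<phi> v)" and
    eq: "\<forall>e\<in>mE G. \<forall>p\<in>open_edge G e. eqn m p (tprod m (b e) (\<phi> (msrc G e))) (tprod m (\<phi> (mtgt G e)) (a e))"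
    unfolding coh_iff by blast
  show ?thesis unfolding coh_iff
  proof (intro exI[of _ "\<lambda>v. bd m (\<phi> v) idm"] conjI ballI)
    fix v assume "v \<in> mV G" then show "star_section G n v (bd m (\<phi> v) idm)"
      using ss ss_bd[of G m v "\<phi> v" "n - m"] mn by simp
  next
    fix e p assume e: "e \<in> mE G" and p: "p \<in> open_edge G e"
    let ?s = "msrc G e" and ?t = "mtgt G e"
    have E: "eqn m p (tprod m (b e) (\<phi> ?s)) (tprod m (\<phi> ?t) (a e))" using eq e p by blast
    show "eqn n p (tprod n (dsum m b h e) (bd m (\<phi> ?s) idm)) (tprod n (bd m (\<phi> ?t) idm) (dsum m a h e))"
      unfolding eqn_def dsum_bd
    proof (intro allI impI)
      fix i j assume i: "i < n" and j: "j < n"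
      have "tprod n (bd m (b e) (h e)) (bd m (\<phi> ?s) idm) i j p = bd m (tprod m (b e) (\<phi> ?s)) (tprod (n - m) (h e) idm) i j p"
        by (rule tprod_bd[OF mn i j])
      also have "\<dots> = bd m (tprod m (\<phi> ?t) (a e)) (tprod (n - m) idm (h e)) i j p"
        using E i j mn by (auto simp: bd_def eqn_def tprod_id_left tprod_id_right)
      also have "\<dots> = tprod n (bd m (\<phi> ?t) idm) (bd m (a e) (h e)) i j p"
        by (rule tprod_bd[OF mn i j, symmetric])
      finally show "tprod n (bd m (b e) (h e)) (bd m (\<phi> ?s) idm) i j p = tprod n (bd m (\<phi> ?t) idm) (bd m (a e) (h e)) i j p" .
    qed
  qed
qed

lemma tprod_pmat_left:
  assumes "\<pi> i < n" shows "tprod n (pmat \<pi>) A i j p = A (\<pi> i) j p"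
  unfolding tprod_def by (subst INF_single[of "\<pi> i"]) (use assms in \<open>auto simp: pmat_def\<close>)

lemma tprod_pmat_right:
  assumes "\<pi> j < n" shows "tprod n A (minv (pmat \<pi>)) i j p = A i (\<pi> j) p"
  unfolding tprod_def by (subst INF_single[of "\<pi> j"]) (use assms in \<open>auto simp: pmat_def minv_def\<close>)

lemma coh_perm:
  assumes wf: "WF G" and bij: "bij_betw \<pi> {..<n} {..<n}"
  shows "cohomologous G n a (\<lambda>e. tprod n (tprod n (pmat \<pi>) (a e)) (minv (pmat \<pi>)))"
  unfolding coh_iff
proof (intro exI[of _ "\<lambda>v. pmat \<pi>"] conjI ballI)
  fix v show "star_section G n v (pmat \<pi>)" by (rule ss_pmat[OF bij])
next
  fix e p assume e: "e \<in> mE G" and p: "p \<in> open_edge G e"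
  let ?Q = "pmat \<pi> :: nat \<Rightarrow> nat \<Rightarrow> ('v, 'e) gpoint \<Rightarrow> ereal"
  have ps: "p \<in> star G (msrc G e)" using open_edge_star[OF e] p by blast
  have pmq: "pm n p ?Q" by (rule ss_pm[OF ss_pmat[OF bij] ps])
  have "eqn n p (tprod n (tprod n (tprod n ?Q (a e)) (minv ?Q)) ?Q) (tprod n (tprod n ?Q (a e)) (tprod n (minv ?Q) ?Q))"
    by (rule eqn_assoc)
  also have "eqn n p \<dots> (tprod n (tprod n ?Q (a e)) idm)"
    by (rule tprod_cong[OF eqn_refl pm_inv_left[OF pmq]])
  also have "eqn n p \<dots> (tprod n ?Q (a e))" by (rule eqn_idr)
  finally show "eqn n p (tprod n (tprod n (tprod n ?Q (a e)) (minv ?Q)) ?Q) (tprod n ?Q (a e))" .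
qed

theorem proposition2p5:
  fixes G :: "('v, 'e) osmodel" and m n :: nat and f g :: "'e \<Rightarrow> ('v, 'e) tmat"
  assumes "oriented_simple_model G"
    and "trans_data G n g"
    and "trans_data G m f"
    and "subbundle G m f n g"
  shows "\<exists>k h. trans_data G k h \<and> subbundle G k h n g \<and> m + k = n \<and>
               cohomologous G n g (dsum m f h)"
proof -
  have wf: "WF G" using assms(1) unfolding oriented_simple_model_def WF_def by blast
  from assms(4) obtain f' g' where mn: "m \<le> n" and tf': "trans_data G m f'" and tg': "trans_data G n g'"
    and cf: "cohomologous G m f f'" and cg: "cohomologous G n g g'"
    and TL: "\<forall>e\<in>mE G. \<forall>p\<in>open_edge G e. \<forall>i<m. \<forall>j<m. g' e i j p = f' e i j p"
    and BL: "\<forall>e\<in>mE G. \<forall>p\<in>open_edge G e. \<forall>i j. m \<le> i \<and> i < n \<and> j < m \<longrightarrow> g' e i j p = \<infinity>"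
    unfolding subbundle_def by blast
  define k where "k = n - m"
  have nk: "n = m + k" using mn k_def by simp
  define h where "h = (\<lambda>e i j. g' e (i + m) (j + m))"
  have mg: "monomial_mat n (open_edge G e) (int_affine_on_edge G e) (g' e)" if "e \<in> mE G" for e
    using tg' that unfolding trans_data_def by blast
  have mf: "monomial_mat m (open_edge G e) (int_affine_on_edge G e) (f' e)" if "e \<in> mE G" for e
    using tf' that unfolding trans_data_def by blast
  have BLi: "is_infinite_on (open_edge G e) (g' e i j)" if "e \<in> mE G" "m \<le> i" "i < n" "j < m" for e i j
    using BL that unfolding is_infinite_on_def by blast
  have TR: "is_infinite_on (open_edge G e) (g' e i j)" if e: "e \<in> mE G" and ij: "i < m" "m \<le> j" "j < n" for e i j
  proof -
    from mmD(2)[OF mf[OF e] ij(1)] obtain j1 where j1: "j1 < m" "\<not> is_infinite_on (open_edge G e) (f' e i j1)" by blast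
    have "\<not> is_infinite_on (open_edge G e) (g' e i j1)" using j1 TL e ij(1) unfolding is_infinite_on_def by auto
    moreover have "i < n" using ij mn by simp
    ultimately show ?thesis using mmD(2)[OF mg[OF e], of i] j1 ij mn by (metis less_le_trans not_le)
  qed
  have TRp: "g' e i j p = \<infinity>" if "e \<in> mE G" "p \<in> open_edge G e" "i < m" "m \<le> j" "j < n" for e i j p
    using TR[OF that(1,3,4,5)] that(2) unfolding is_infinite_on_def by blast
  have th: "trans_data G k h"
    unfolding trans_data_def
  proof
    fix e assume e: "e \<in> mE G"
    show "monomial_mat k (open_edge G e) (int_affine_on_edge G e) (h e)"
      unfolding monomial_mat_def
    proof (intro conjI allI impI)
      fix i j assume "i < k" "j < k"
      then show "is_infinite_on (open_edge G e) (h e i j) \<or> int_affine_on_edge G e (h e i j)"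
        using mmD(1)[OF mg[OF e], of "i + m" "j + m"] nk unfolding h_def by simp
    next
      fix i assume i: "i < k"
      from mmD(2)[OF mg[OF e], of "i + m"] i nk obtain j0 where j0: "j0 < n" "\<not> is_infinite_on (open_edge G e) (g' e (i + m) j0)"
        and u: "\<And>j. j < n \<Longrightarrow> \<not> is_infinite_on (open_edge G e) (g' e (i + m) j) \<Longrightarrow> j = j0" by auto
      have "m \<le> j0" using BLi[OF e, of "i + m" j0] j0 i nk by (metis add.commute le_add2 nat_add_left_cancel_less not_le)
      show "\<exists>!j. j < k \<and> \<not> is_infinite_on (open_edge G e) (h e i j)"
      proof (rule ex1I[of _ "j0 - m"])
        show "j0 - m < k \<and> \<not> is_infinite_on (open_edge G e) (h e i (j0 - m))"
          using j0 \<open>m \<le> j0\<close> nk unfolding h_def by simp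
      next
        fix j assume "j < k \<and> \<not> is_infinite_on (open_edge G e) (h e i j)"
        then have "j + m = j0" using u[of "j + m"] nk unfolding h_def by simp
        then show "j = j0 - m" by simp
      qed
    next
      fix j assume j: "j < k"
      from mmD(3)[OF mg[OF e], of "j + m"] j nk obtain i0 where i0: "i0 < n" "\<not> is_infinite_on (open_edge G e) (g' e i0 (j + m))"
        and u: "\<And>i. i < n \<Longrightarrow> \<not> is_infinite_on (open_edge G e) (g' e i (j + m)) \<Longrightarrow> i = i0" by auto
      have "m \<le> i0" using TR[OF e, of i0 "j + m"] i0 j nk by (metis add.commute le_add2 nat_add_left_cancel_less not_le)
      show "\<exists>!i. i < k \<and> \<not> is_infinite_on (open_edge G e) (h e i j)"
      proof (rule ex1I[of _ "i0 - m"])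
        show "i0 - m < k \<and> \<not> is_infinite_on (open_edge G e) (h e (i0 - m) j)"
          using i0 \<open>m \<le> i0\<close> nk unfolding h_def by simp
      next
        fix i assume "i < k \<and> \<not> is_infinite_on (open_edge G e) (h e i j)"
        then have "i + m = i0" using u[of "i + m"] nk unfolding h_def by simp
        then show "i = i0 - m" by simp
      qed
    qed
  qed
  have EQ: "eqn n p (g' e) (dsum m f' h e)" if e: "e \<in> mE G" and p: "p \<in> open_edge G e" for e p
    unfolding eqn_def
  proof (intro allI impI)
    fix i j assume i: "i < n" and j: "j < n"
    show "g' e i j p = dsum m f' h e i j p"
      using TL e p BL TRp[OF e p] i j unfolding dsum_def h_def by auto
  qed
  have G1: "cohomologous G n g (dsum m f' h)" by (rule coh_cong[OF cg EQ])
  have G4: "cohomologous G n g (dsum m f h)"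
    by (rule coh_trans[OF G1 coh_bd[OF mn coh_sym[OF wf cf]]])
  define \<pi> where "\<pi> = (\<lambda>i::nat. if i < k then i + m else i - k)"
  have bij: "bij_betw \<pi> {..<n} {..<n}"
    by (rule bij_betw_byWitness[where f'="\<lambda>j. if j < m then j + k else j - m"]) (auto simp: \<pi>_def nk)
  have pr: "\<pi> i < n" if "i < n" for i using bij that unfolding bij_betw_def by blast
  let ?D = "dsum m f h"
  have G5: "cohomologous G n ?D (\<lambda>e. tprod n (tprod n (pmat \<pi>) (?D e)) (minv (pmat \<pi>)))"
    by (rule coh_perm[OF wf bij])
  have EQ2: "eqn n p (tprod n (tprod n (pmat \<pi>) (?D e)) (minv (pmat \<pi>))) (dsum k h f e)" for e p
    unfolding eqn_def
  proof (intro allI impI)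
    fix i j assume i: "i < n" and j: "j < n"
    have "tprod n (tprod n (pmat \<pi>) (?D e)) (minv (pmat \<pi>)) i j p = ?D e (\<pi> i) (\<pi> j) p"
      by (simp add: tprod_pmat_right[where \<pi>=\<pi>, OF pr[OF j]] tprod_pmat_left[where \<pi>=\<pi>, OF pr[OF i]])
    also have "\<dots> = dsum k h f e i j p"
      using i j nk unfolding dsum_def \<pi>_def by auto
    finally show "tprod n (tprod n (pmat \<pi>) (?D e)) (minv (pmat \<pi>)) i j p = dsum k h f e i j p" .
  qed
  have G6: "cohomologous G n g (dsum k h f)"
    by (rule coh_trans[OF G4 coh_cong[OF G5 EQ2]])
  have tdkf: "trans_data G n (dsum k h f)"
    unfolding trans_data_def dsum_bd
  proof
    fix e assume e: "e \<in> mE G"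
    have "monomial_mat k (open_edge G e) (int_affine_on_edge G e) (h e)" using th e unfolding trans_data_def by blast
    moreover have "monomial_mat m (open_edge G e) (int_affine_on_edge G e) (f e)" using assms(3) e unfolding trans_data_def by blast
    ultimately show "monomial_mat n (open_edge G e) (int_affine_on_edge G e) (bd k (h e) (f e))"
      using mm_bd nk by (metis add.commute)
  qed
  have sub: "subbundle G k h n g"
    unfolding subbundle_def
  proof (rule conjI)
    show "k \<le> n" using nk by simp
  next
    show "\<exists>f' g'. trans_data G k f' \<and> trans_data G n g' \<and> cohomologous G k h f' \<and> cohomologous G n g g' \<and>
        (\<forall>e\<in>mE G. \<forall>p\<in>open_edge G e. \<forall>i<k. \<forall>j<k. g' e i j p = f' e i j p) \<and>
        (\<forall>e\<in>mE G. \<forall>p\<in>open_edge G e. \<forall>i j. k \<le> i \<and> i < n \<and> j < k \<longrightarrow> g' e i j p = \<infinity>)"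
  proof (rule exI[where x=h], rule exI[where x="dsum k h f"], intro conjI)
    show "trans_data G k h" by (rule th)
    show "trans_data G n (dsum k h f)" by (rule tdkf)
    show "cohomologous G k h h" by (rule coh_refl)
    show "cohomologous G n g (dsum k h f)" by (rule G6)
    show "\<forall>e\<in>mE G. \<forall>p\<in>open_edge G e. \<forall>i<k. \<forall>j<k. dsum k h f e i j p = h e i j p"
      by (simp add: dsum_def)
    show "\<forall>e\<in>mE G. \<forall>p\<in>open_edge G e. \<forall>i j. k \<le> i \<and> i < n \<and> j < k \<longrightarrow> dsum k h f e i j p = \<infinity>"
      by (simp add: dsum_def)
  qed
  qed
  show ?thesis using th sub nk G4 by blast
qed

end
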